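(* Let $p\ge 2$, let $E$ be a Banach space and $f=\sum_{i\in I}d_i$ a finite sum in $E$. Let $(\varepsilon_i)_{i\in I}$ be independent random variables with $P(\varepsilon_i=\pm1)=1/2$, $S=\big(\mathbb E\|\sum_{i\in I}\varepsilon_id_i\|^p\big)^{1/p}$, and $f^{\otimes p}=f\otimes\cdots\otimes f$ ($p$ times). Then $$\Big\|f^{\otimes p}-\sum_{g\colon\{1,\dots,p\}\to I\ \text{injective}}d_{g(1)}\otimes\cdots\otimes d_{g(p)}\Big\|_\wedge\le\sum_{0\le s\le p-2}\binom{p}{s}(p-s)!\,\|f\|^s S^{p-s}.$$
   Context: $\|\cdot\|_\wedge$ is the projective tensor norm on the $p$-fold projective tensor product $E\widehat\otimes\cdots\widehat\otimes E$. *)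

theory Defs
  imports "HOL-Probability.Probability"
begin

definition multilinear_form :: "nat \<Rightarrow> ((nat \<Rightarrow> 'a::real_vector) \<Rightarrow> real) \<Rightarrow> bool" where
  "multilinear_form p \<phi> \<longleftrightarrow>
     (\<forall>x y. (\<forall>j\<in>{1..p}. x j = y j) \<longrightarrow> \<phi> x = \<phi> y) \<and>
     (\<forall>x j. j \<in> {1..p} \<longrightarrow> linear (\<lambda>v. \<phi> (x(j := v))))"

(* An element t of the algebraic p-fold tensor product E \<otimes> ... \<otimes> E is identified with
   its action on p-linear forms (universal property). *)
definition proj_tensor_norm ::
    "nat \<Rightarrow> (((nat \<Rightarrow> 'a::real_normed_vector) \<Rightarrow> real) \<Rightarrow> real) \<Rightarrow> real" where
  "proj_tensor_norm p t = Inf {(\<Sum>k<n. \<Prod>j\<in>{1..p}. norm ((x :: nat \<Rightarrow> nat \<Rightarrow> 'a) k j)) | n x.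
       \<forall>\<phi>. multilinear_form p \<phi> \<longrightarrow> t \<phi> = (\<Sum>k<n. \<phi> (x k))}"

end

theory Submission
  imports Defs "HOL-Combinatorics.Permutations"
begin


lemma sum_PiE_insert:
  assumes "a \<notin> A" "finite A" "finite (B a)"
  shows "(\<Sum>h\<in>PiE (insert a A) B. g h) = (\<Sum>b\<in>B a. \<Sum>h\<in>PiE A B. g (h(a := b)))"
proof -
  have "(\<Sum>h\<in>PiE (insert a A) B. g h) = (\<Sum>z\<in>B a \<times> PiE A B. g ((\<lambda>(y, h). h(a := y)) z))"
    unfolding PiE_insert_eq by (rule sum.reindex[OF inj_combinator[OF assms(1)], unfolded comp_def])
  also have "\<dots> = (\<Sum>b\<in>B a. \<Sum>h\<in>PiE A B. g (h(a := b)))"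
    by (simp add: sum.cartesian_product split_def)
  finally show ?thesis .
qed

lemma ml_lin:
  assumes "multilinear_form p \<phi>" "j \<in> {1..p}"
  shows "linear (\<lambda>v. \<phi> (x(j := v)))"
  using assms unfolding multilinear_form_def by blast

lemma ml_cong:
  assumes "multilinear_form p \<phi>" "\<And>j. j \<in> {1..p} \<Longrightarrow> x j = y j"
  shows "\<phi> x = \<phi> y"
  using assms unfolding multilinear_form_def by blast

lemma ml_expand_gen:
  assumes ml: "multilinear_form p \<phi>" and fin: "finite I"
  shows "m \<le> p \<Longrightarrow> \<phi> (\<lambda>j. if j \<in> {1..m} then (\<Sum>i\<in>I. c j i *\<^sub>R d i) else x j) =
     (\<Sum>h\<in>PiE {1..m} (\<lambda>_. I). (\<Prod>j\<in>{1..m}. c j (h j)) * \<phi> (\<lambda>j. if j \<in> {1..m} then d (h j) else x j))"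
proof (induction m arbitrary: x)
  case 0
  then show ?case by simp
next
  case (Suc m)
  let ?a = "Suc m"
  have ins: "{1..Suc m} = insert ?a {1..m}" by auto
  have lin: "linear (\<lambda>v. \<phi> (y(?a := v)))" for y
    using ml_lin[OF ml, of ?a] Suc.prems by auto
  define y where "y = (\<lambda>j. if j \<in> {1..m} then (\<Sum>i\<in>I. c j i *\<^sub>R d i) else x j)"
  have "\<phi> (\<lambda>j. if j \<in> {1..Suc m} then (\<Sum>i\<in>I. c j i *\<^sub>R d i) else x j)
      = \<phi> (y(?a := (\<Sum>i\<in>I. c ?a i *\<^sub>R d i)))"
    by (rule arg_cong[where f=\<phi>]) (auto simp: y_def)
  also have "\<dots> = (\<Sum>i\<in>I. c ?a i * \<phi> (y(?a := d i)))"
    using linear_sum[OF lin[of y], of "\<lambda>i. c ?a i *\<^sub>R d i" I] linear_cmul[OF lin[of y]]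
    by simp
  also have "\<dots> = (\<Sum>i\<in>I. c ?a i * (\<Sum>h\<in>PiE {1..m} (\<lambda>_. I). (\<Prod>j\<in>{1..m}. c j (h j)) *
        \<phi> (\<lambda>j. if j \<in> {1..m} then d (h j) else (x(?a := d i)) j)))"
  proof (rule sum.cong[OF refl])
    fix i assume "i \<in> I"
    have "y(?a := d i) = (\<lambda>j. if j \<in> {1..m} then (\<Sum>i\<in>I. c j i *\<^sub>R d i) else (x(?a := d i)) j)"
      by (auto simp: y_def)
    then show "c ?a i * \<phi> (y(?a := d i)) = c ?a i * (\<Sum>h\<in>PiE {1..m} (\<lambda>_. I). (\<Prod>j\<in>{1..m}. c j (h j)) *
        \<phi> (\<lambda>j. if j \<in> {1..m} then d (h j) else (x(?a := d i)) j))"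
      using Suc.IH[of "x(?a := d i)"] Suc.prems by simp
  qed
  also have "\<dots> = (\<Sum>i\<in>I. \<Sum>h\<in>PiE {1..m} (\<lambda>_. I). (\<Prod>j\<in>{1..Suc m}. c j ((h(?a := i)) j)) *
        \<phi> (\<lambda>j. if j \<in> {1..Suc m} then d ((h(?a := i)) j) else x j))"
  proof (rule sum.cong[OF refl])
    fix i assume "i \<in> I"
    show "c ?a i * (\<Sum>h\<in>PiE {1..m} (\<lambda>_. I). (\<Prod>j\<in>{1..m}. c j (h j)) *
        \<phi> (\<lambda>j. if j \<in> {1..m} then d (h j) else (x(?a := d i)) j)) =
      (\<Sum>h\<in>PiE {1..m} (\<lambda>_. I). (\<Prod>j\<in>{1..Suc m}. c j ((h(?a := i)) j)) *
        \<phi> (\<lambda>j. if j \<in> {1..Suc m} then d ((h(?a := i)) j) else x j))"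
      unfolding sum_distrib_left
    proof (rule sum.cong[OF refl])
      fix h assume "h \<in> PiE {1..m} (\<lambda>_. I)"
      have e1: "(\<Prod>j\<in>{1..Suc m}. c j ((h(?a := i)) j)) = c ?a i * (\<Prod>j\<in>{1..m}. c j (h j))"
        unfolding ins by (subst prod.insert) (auto intro!: prod.cong)
      have e2: "(\<lambda>j. if j \<in> {1..m} then d (h j) else (x(?a := d i)) j) =
          (\<lambda>j. if j \<in> {1..Suc m} then d ((h(?a := i)) j) else x j)"
        by (auto simp: fun_eq_iff)
      show "c ?a i * ((\<Prod>j\<in>{1..m}. c j (h j)) * \<phi> (\<lambda>j. if j \<in> {1..m} then d (h j) else (x(?a := d i)) j)) =
         (\<Prod>j\<in>{1..Suc m}. c j ((h(?a := i)) j)) * \<phi> (\<lambda>j. if j \<in> {1..Suc m} then d ((h(?a := i)) j) else x j)"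
        using e1 e2 by simp
    qed
  qed
  also have "\<dots> = (\<Sum>h\<in>PiE {1..Suc m} (\<lambda>_. I). (\<Prod>j\<in>{1..Suc m}. c j (h j)) *
        \<phi> (\<lambda>j. if j \<in> {1..Suc m} then d (h j) else x j))"
    unfolding ins by (subst sum_PiE_insert) (use fin in auto)
  finally show ?case .
qed

lemma ml_expand:
  assumes ml: "multilinear_form p \<phi>" and fin: "finite I"
  shows "\<phi> (\<lambda>j. \<Sum>i\<in>I. c j i *\<^sub>R d i) =
     (\<Sum>h\<in>PiE {1..p} (\<lambda>_. I). (\<Prod>j\<in>{1..p}. c j (h j)) * \<phi> (\<lambda>j. d (h j)))"
proof -
  have "\<phi> (\<lambda>j. \<Sum>i\<in>I. c j i *\<^sub>R d i) = \<phi> (\<lambda>j. if j \<in> {1..p} then (\<Sum>i\<in>I. c j i *\<^sub>R d i) else 0)"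
    by (rule ml_cong[OF ml]) auto
  also have "\<dots> = (\<Sum>h\<in>PiE {1..p} (\<lambda>_. I). (\<Prod>j\<in>{1..p}. c j (h j)) * \<phi> (\<lambda>j. if j \<in> {1..p} then d (h j) else 0))"
    by (rule ml_expand_gen[OF ml fin]) simp
  also have "\<dots> = (\<Sum>h\<in>PiE {1..p} (\<lambda>_. I). (\<Prod>j\<in>{1..p}. c j (h j)) * \<phi> (\<lambda>j. d (h j)))"
    by (intro sum.cong refl arg_cong2[where f="(*)"] ml_cong[OF ml]) auto
  finally show ?thesis .
qed



lemma proj_le:
  fixes x :: "'k \<Rightarrow> nat \<Rightarrow> 'a::real_normed_vector"
  assumes fin: "finite K" and p1: "p \<ge> 1"
    and rep: "\<And>\<phi>. multilinear_form p \<phi> \<Longrightarrow> t \<phi> = (\<Sum>k\<in>K. c k * \<phi> (x k))"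
  shows "proj_tensor_norm p t \<le> (\<Sum>k\<in>K. \<bar>c k\<bar> * (\<Prod>j\<in>{1..p}. norm (x k j)))"
proof -
  obtain h where h: "bij_betw h {0..<card K} K" using ex_bij_betw_nat_finite[OF fin] by blast
  define y where "y = (\<lambda>m. (x (h m))(1 := c (h m) *\<^sub>R x (h m) 1))"
  have ins: "{1..p} = insert 1 {2..p}" using p1 by auto
  have cost: "(\<Prod>j\<in>{1..p}. norm (y m j)) = \<bar>c (h m)\<bar> * (\<Prod>j\<in>{1..p}. norm (x (h m) j))" for m
    unfolding ins y_def by (subst prod.insert, simp, simp)+ (auto intro!: prod.cong)
  have val: "\<phi> (y m) = c (h m) * \<phi> (x (h m))" if ml: "multilinear_form p \<phi>" for \<phi> m
  proof -
    have lin: "linear (\<lambda>v. \<phi> ((x (h m))(1 := v)))" using ml_lin[OF ml, of 1] p1 by auto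
    have "\<phi> (y m) = \<phi> ((x (h m))(1 := c (h m) *\<^sub>R x (h m) 1))" by (simp add: y_def)
    also have "\<dots> = c (h m) * \<phi> ((x (h m))(1 := x (h m) 1))"
      using linear_cmul[OF lin] by simp
    finally show ?thesis by simp
  qed
  have "t \<phi> = (\<Sum>m<card K. \<phi> (y m))" if "multilinear_form p \<phi>" for \<phi>
    using rep[OF that] val[OF that] sum.reindex_bij_betw[OF h, of "\<lambda>k. c k * \<phi> (x k)"]
    by (simp add: atLeast0LessThan)
  then have mem: "(\<Sum>m<card K. \<Prod>j\<in>{1..p}. norm (y m j)) \<in> {(\<Sum>k<n. \<Prod>j\<in>{1..p}. norm ((x :: nat \<Rightarrow> nat \<Rightarrow> 'a::real_normed_vector) k j)) | n x.
       \<forall>\<phi>. multilinear_form p \<phi> \<longrightarrow> t \<phi> = (\<Sum>k<n. \<phi> (x k))}" by blast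
  have bdd: "bdd_below {(\<Sum>k<n. \<Prod>j\<in>{1..p}. norm ((x :: nat \<Rightarrow> nat \<Rightarrow> 'a::real_normed_vector) k j)) | n x.
       \<forall>\<phi>. multilinear_form p \<phi> \<longrightarrow> t \<phi> = (\<Sum>k<n. \<phi> (x k))}"
    by (rule bdd_belowI[of _ 0]) (auto intro!: sum_nonneg prod_nonneg)
  have "proj_tensor_norm p t \<le> (\<Sum>m<card K. \<Prod>j\<in>{1..p}. norm (y m j))"
    unfolding proj_tensor_norm_def by (rule cInf_lower[OF mem bdd])
  also have "\<dots> = (\<Sum>m<card K. \<bar>c (h m)\<bar> * (\<Prod>j\<in>{1..p}. norm (x (h m) j)))"
    by (rule sum.cong[OF refl], rule cost)
  also have "\<dots> = (\<Sum>k\<in>K. \<bar>c k\<bar> * (\<Prod>j\<in>{1..p}. norm (x k j)))"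
    using sum.reindex_bij_betw[OF h, of "\<lambda>k. \<bar>c k\<bar> * (\<Prod>j\<in>{1..p}. norm (x k j))"]
    by (simp add: atLeast0LessThan)
  finally show ?thesis .
qed



definition sgns :: "'i set \<Rightarrow> ('i \<Rightarrow> real) set" where
  "sgns I = PiE I (\<lambda>_. {-1, 1})"

lemma finite_sgns: "finite I \<Longrightarrow> finite (sgns I)"
  unfolding sgns_def by (intro finite_PiE) auto

lemma card_sgns: "finite I \<Longrightarrow> card (sgns I) = 2 ^ card I"
  unfolding sgns_def by (auto simp: card_PiE numeral_2_eq_2)

lemma sgns_sq: "\<rho> \<in> sgns I \<Longrightarrow> i \<in> I \<Longrightarrow> \<rho> i * \<rho> i = 1"
  unfolding sgns_def by (auto simp: PiE_iff)

lemma sum_sgns_prod: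
  fixes g :: "'i \<Rightarrow> real \<Rightarrow> real"
  assumes "finite I"
  shows "(\<Sum>\<rho>\<in>sgns I. \<Prod>i\<in>I. g i (\<rho> i)) = (\<Prod>i\<in>I. g i (-1) + g i 1)"
  unfolding sgns_def using prod_sum_PiE[OF assms, of "\<lambda>_. {-1,1::real}" g] by simp

lemma sign_pair:
  assumes fin: "finite I" and ab: "a \<in> I" "b \<in> I"
  shows "(\<Sum>\<rho>\<in>sgns I. \<rho> a * \<rho> b) = (if a = b then real (card (sgns I)) else 0)"
proof -
  define g where "g = (\<lambda>i (s::real). (if i = a then s else 1) * (if i = b then s else 1))"
  have "\<rho> a * \<rho> b = (\<Prod>i\<in>I. g i (\<rho> i))" for \<rho>
  proof (cases "a = b")
    case True
    then show ?thesis using ab fin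
      by (simp add: g_def prod.distrib prod.delta)
  next
    case False
    then show ?thesis using ab fin
      by (simp add: g_def prod.delta prod.distrib)
  qed
  then have "(\<Sum>\<rho>\<in>sgns I. \<rho> a * \<rho> b) = (\<Prod>i\<in>I. g i (-1) + g i 1)"
    using sum_sgns_prod[OF fin, of g] by simp
  also have "\<dots> = (if a = b then real (card (sgns I)) else 0)"
  proof (cases "a = b")
    case True
    then have "(\<Prod>i\<in>I. g i (-1) + g i 1) = (\<Prod>i\<in>I. 2)" by (intro prod.cong) (auto simp: g_def)
    then show ?thesis using True fin by (simp add: card_sgns)
  next
    case False
    have "g a (-1) + g a 1 = 0" using False by (simp add: g_def)
    then have "(\<Prod>i\<in>I. g i (-1) + g i 1) = 0" using ab fin by (intro prod_zero) auto
    then show ?thesis using False by simp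
  qed
  finally show ?thesis .
qed

definition sgnsp :: "nat \<Rightarrow> 'i set \<Rightarrow> (nat \<Rightarrow> 'i \<Rightarrow> real) set" where
  "sgnsp p I = PiE {1..p} (\<lambda>_. sgns I)"

lemma finite_sgnsp: "finite I \<Longrightarrow> finite (sgnsp p I)"
  unfolding sgnsp_def by (intro finite_PiE finite_sgns) auto

lemma card_sgnsp: "finite I \<Longrightarrow> card (sgnsp p I) = card (sgns I) ^ p"
  unfolding sgnsp_def by (simp add: card_PiE)

lemma sum_sgnsp_prod:
  fixes G :: "nat \<Rightarrow> ('i \<Rightarrow> real) \<Rightarrow> real"
  assumes "finite I"
  shows "(\<Sum>\<sigma>\<in>sgnsp p I. \<Prod>j\<in>{1..p}. G j (\<sigma> j)) = (\<Prod>j\<in>{1..p}. \<Sum>\<rho>\<in>sgns I. G j \<rho>)"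
  unfolding sgnsp_def using prod_sum_PiE[of "{1..p}" "\<lambda>_. sgns I" G] finite_sgns[OF assms] by simp

lemma avg_cycle:
  fixes h :: "nat \<Rightarrow> 'i"
  assumes fin: "finite I" and tau: "\<tau> permutes {1..p}" and h: "h \<in> PiE {1..p} (\<lambda>_. I)"
  shows "(\<Sum>\<sigma>\<in>sgnsp p I. \<Prod>j\<in>{1..p}. \<sigma> j (h j) * \<sigma> (\<tau> j) (h j)) =
     (if \<forall>j\<in>{1..p}. h (\<tau> j) = h j then real (card (sgnsp p I)) else 0)"
proof -
  let ?t = "inv \<tau>"
  have ti: "?t permutes {1..p}" using permutes_inv[OF tau] .
  have r: "(\<Prod>j\<in>{1..p}. \<sigma> (\<tau> j) (h j)) = (\<Prod>j\<in>{1..p}. \<sigma> j (h (?t j)))" for \<sigma> :: "nat \<Rightarrow> 'i \<Rightarrow> real"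
  proof -
    have "(\<Prod>j\<in>{1..p}. \<sigma> j (h (?t j))) = (\<Prod>j\<in>{1..p}. \<sigma> (\<tau> j) (h (?t (\<tau> j))))"
      using prod.reindex_bij_betw[OF permutes_imp_bij[OF tau], of "\<lambda>j. \<sigma> j (h (?t j))"] by simp
    also have "\<dots> = (\<Prod>j\<in>{1..p}. \<sigma> (\<tau> j) (h j))"
      using permutes_inverses(2)[OF tau] by simp
    finally show ?thesis by simp
  qed
  have "(\<Sum>\<sigma>\<in>sgnsp p I. \<Prod>j\<in>{1..p}. \<sigma> j (h j) * \<sigma> (\<tau> j) (h j)) =
        (\<Sum>\<sigma>\<in>sgnsp p I. \<Prod>j\<in>{1..p}. \<sigma> j (h j) * \<sigma> j (h (?t j)))"
    by (simp only: prod.distrib r)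
  also have "\<dots> = (\<Prod>j\<in>{1..p}. \<Sum>\<rho>\<in>sgns I. \<rho> (h j) * \<rho> (h (?t j)))"
    by (rule sum_sgnsp_prod[OF fin])
  also have "\<dots> = (\<Prod>j\<in>{1..p}. if h j = h (?t j) then real (card (sgns I)) else 0)"
  proof (rule prod.cong[OF refl])
    fix j assume j: "j \<in> {1..p}"
    then have "?t j \<in> {1..p}" using permutes_in_image[OF ti] by simp
    then show "(\<Sum>\<rho>\<in>sgns I. \<rho> (h j) * \<rho> (h (?t j))) = (if h j = h (?t j) then real (card (sgns I)) else 0)"
      using j h by (intro sign_pair[OF fin]) (auto simp: PiE_iff)
  qed
  also have "\<dots> = (if \<forall>j\<in>{1..p}. h j = h (?t j) then real (card (sgns I)) ^ p else 0)"
    by (auto simp: prod_constant)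
  also have "(\<forall>j\<in>{1..p}. h j = h (?t j)) = (\<forall>j\<in>{1..p}. h (\<tau> j) = h j)"
  proof
    assume A: "\<forall>j\<in>{1..p}. h j = h (?t j)"
    show "\<forall>j\<in>{1..p}. h (\<tau> j) = h j"
    proof
      fix j assume "j \<in> {1..p}"
      then have "\<tau> j \<in> {1..p}" using permutes_in_image[OF tau] by simp
      then show "h (\<tau> j) = h j" using A permutes_inverses(2)[OF tau] by metis
    qed
  next
    assume A: "\<forall>j\<in>{1..p}. h (\<tau> j) = h j"
    show "\<forall>j\<in>{1..p}. h j = h (?t j)"
    proof
      fix j assume "j \<in> {1..p}"
      then have "?t j \<in> {1..p}" using permutes_in_image[OF ti] by simp
      then show "h j = h (?t j)" using A permutes_inverses(1)[OF tau] by metis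
    qed
  qed
  finally show ?thesis by (simp add: card_sgnsp[OF fin])
qed

lemma sign_sum_inj:
  fixes p :: nat and h :: "nat \<Rightarrow> 'i"
  assumes h: "h \<in> PiE {1..p} (\<lambda>_. I)"
  shows "(\<Sum>\<tau>\<in>{\<tau>. \<tau> permutes {1..p}}. real_of_int (sign \<tau>) * (if \<forall>j\<in>{1..p}. h (\<tau> j) = h j then 1 else 0))
      = (if inj_on h {1..p} then 1 else 0)"
proof -
  let ?P = "{\<tau>. \<tau> permutes {1..p}}"
  let ?Q = "{\<tau>. \<tau> permutes {1..p} \<and> (\<forall>j\<in>{1..p}. h (\<tau> j) = h j)}"
  have finP: "finite ?P" using finite_permutations[of "{1..p}"] by simp
  have "(\<Sum>\<tau>\<in>?P. real_of_int (sign \<tau>) * (if \<forall>j\<in>{1..p}. h (\<tau> j) = h j then 1 else 0))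
      = (\<Sum>\<tau>\<in>?Q. real_of_int (sign \<tau>))"
    using finP by (simp add: sum.inter_filter[symmetric] if_distrib[of "\<lambda>x. _ * x"] cong: if_cong)
  also have "\<dots> = (if inj_on h {1..p} then 1 else 0)"
  proof (cases "inj_on h {1..p}")
    case True
    have "?Q = {id}"
    proof safe
      fix \<tau> assume t: "\<tau> permutes {1..p}" "\<forall>j\<in>{1..p}. h (\<tau> j) = h j"
      show "\<tau> = id"
      proof
        fix j show "\<tau> j = id j"
        proof (cases "j \<in> {1..p}")
          case True
          then have "\<tau> j \<in> {1..p}" using permutes_in_image[OF t(1)] by simp
          moreover have "h (\<tau> j) = h j" using t(2) True by blast
          ultimately show ?thesis using True \<open>inj_on h {1..p}\<close> inj_onD by fastforce
        next
          case False
          then show ?thesis using permutes_not_in[OF t(1)] by simp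
        qed
      qed
    qed (auto simp: permutes_id)
    then show ?thesis using True by simp
  next
    case False
    then obtain a b where ab: "a \<in> {1..p}" "b \<in> {1..p}" "a \<noteq> b" "h a = h b"
      unfolding inj_on_def by blast
    let ?s = "Transposition.transpose a b"
    have sw: "?s permutes {1..p}" using permutes_swap_id[OF ab(1,2)] .
    have inQ: "\<tau> \<circ> ?s \<in> ?Q" if "\<tau> \<in> ?Q" for \<tau>
    proof -
      have "\<tau> \<circ> ?s permutes {1..p}" using that sw by (auto intro: permutes_compose)
      moreover have "h ((\<tau> \<circ> ?s) j) = h j" if j: "j \<in> {1..p}" for j
      proof -
        have "?s j \<in> {1..p}" using permutes_in_image[OF sw] j by simp
        then have "h ((\<tau> \<circ> ?s) j) = h (?s j)" using \<open>\<tau> \<in> ?Q\<close> by simp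
        also have "\<dots> = h j" using ab(4) by (auto simp: Transposition.transpose_def)
        finally show ?thesis .
      qed
      ultimately show ?thesis by simp
    qed
    have sgn: "real_of_int (sign (\<tau> \<circ> ?s)) = - real_of_int (sign \<tau>)" if "\<tau> \<in> ?Q" for \<tau>
    proof -
      have "permutation \<tau>" using that by (auto intro: permutes_imp_permutation)
      then show ?thesis using ab(3) by (simp add: sign_compose permutation_swap_id sign_swap_id)
    qed
    have inv: "\<tau> \<circ> ?s \<circ> ?s = \<tau>" for \<tau> :: "nat \<Rightarrow> nat"
      by (simp add: comp_assoc)
    have "(\<Sum>\<tau>\<in>?Q. real_of_int (sign \<tau>)) = (\<Sum>\<tau>\<in>?Q. real_of_int (sign (\<tau> \<circ> ?s)))"
      by (rule sum.reindex_bij_witness[where i="\<lambda>\<tau>. \<tau> \<circ> ?s" and j="\<lambda>\<tau>. \<tau> \<circ> ?s"])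
         (use inv inQ in auto)
    also have "\<dots> = - (\<Sum>\<tau>\<in>?Q. real_of_int (sign \<tau>))"
      using sgn by (simp add: sum_negf)
    finally show ?thesis using False by simp
  qed
  finally show ?thesis .
qed



lemma inj_sum_identity:
  fixes p :: nat and d :: "'i \<Rightarrow> 'a::real_normed_vector"
  assumes ml: "multilinear_form p \<phi>" and fin: "finite I"
  shows "(\<Sum>g \<in> {g. g \<in> {1..p} \<rightarrow>\<^sub>E I \<and> inj_on g {1..p}}. \<phi> (\<lambda>j. d (g j))) =
    (\<Sum>\<tau>\<in>{\<tau>. \<tau> permutes {1..p}}. real_of_int (sign \<tau>) / real (card (sgnsp p I)) *
       (\<Sum>\<sigma>\<in>sgnsp p I. \<phi> (\<lambda>j. \<Sum>i\<in>I. (\<sigma> j i * \<sigma> (\<tau> j) i) *\<^sub>R d i)))"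
proof -
  let ?P = "{\<tau>. \<tau> permutes {1..p}}"
  let ?H = "PiE {1..p} (\<lambda>_. I)"
  let ?N = "real (card (sgnsp p I))"
  have finP: "finite ?P" using finite_permutations[of "{1..p}"] by simp
  have finH: "finite ?H" using fin by (intro finite_PiE) auto
  have finS: "finite (sgnsp p I)" using finite_sgnsp[OF fin] .
  have Npos: "?N > 0" using finS card_sgnsp[OF fin, of p] card_sgns[OF fin]
    by (metis card_gt_0_iff of_nat_0_less_iff power_not_zero zero_neq_numeral card_0_eq finite_sgns[OF fin] bot_nat_0.not_eq_extremum)
  have inner: "(\<Sum>\<sigma>\<in>sgnsp p I. \<phi> (\<lambda>j. \<Sum>i\<in>I. (\<sigma> j i * \<sigma> (\<tau> j) i) *\<^sub>R d i)) =
      ?N * (\<Sum>h\<in>?H. (if \<forall>j\<in>{1..p}. h (\<tau> j) = h j then 1 else 0) * \<phi> (\<lambda>j. d (h j)))"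
    if tau: "\<tau> \<in> ?P" for \<tau>
  proof -
    have "(\<Sum>\<sigma>\<in>sgnsp p I. \<phi> (\<lambda>j. \<Sum>i\<in>I. (\<sigma> j i * \<sigma> (\<tau> j) i) *\<^sub>R d i)) =
        (\<Sum>\<sigma>\<in>sgnsp p I. \<Sum>h\<in>?H. (\<Prod>j\<in>{1..p}. \<sigma> j (h j) * \<sigma> (\<tau> j) (h j)) * \<phi> (\<lambda>j. d (h j)))"
      by (intro sum.cong refl ml_expand[OF ml fin])
    also have "\<dots> = (\<Sum>h\<in>?H. (\<Sum>\<sigma>\<in>sgnsp p I. \<Prod>j\<in>{1..p}. \<sigma> j (h j) * \<sigma> (\<tau> j) (h j)) * \<phi> (\<lambda>j. d (h j)))"
      by (subst sum.swap) (simp add: sum_distrib_right)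
    also have "\<dots> = (\<Sum>h\<in>?H. (if \<forall>j\<in>{1..p}. h (\<tau> j) = h j then ?N else 0) * \<phi> (\<lambda>j. d (h j)))"
      by (intro sum.cong refl, subst avg_cycle[OF fin]) (use tau in auto)
    also have "\<dots> = ?N * (\<Sum>h\<in>?H. (if \<forall>j\<in>{1..p}. h (\<tau> j) = h j then 1 else 0) * \<phi> (\<lambda>j. d (h j)))"
      by (simp add: sum_distrib_left) (intro sum.cong refl, simp)
    finally show ?thesis .
  qed
  have "(\<Sum>\<tau>\<in>?P. real_of_int (sign \<tau>) / ?N *
       (\<Sum>\<sigma>\<in>sgnsp p I. \<phi> (\<lambda>j. \<Sum>i\<in>I. (\<sigma> j i * \<sigma> (\<tau> j) i) *\<^sub>R d i))) =
      (\<Sum>\<tau>\<in>?P. \<Sum>h\<in>?H. real_of_int (sign \<tau>) * (if \<forall>j\<in>{1..p}. h (\<tau> j) = h j then 1 else 0) * \<phi> (\<lambda>j. d (h j)))"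
    using Npos by (intro sum.cong refl) (simp add: inner sum_distrib_left mult.assoc)
  also have "\<dots> = (\<Sum>h\<in>?H. (\<Sum>\<tau>\<in>?P. real_of_int (sign \<tau>) * (if \<forall>j\<in>{1..p}. h (\<tau> j) = h j then 1 else 0)) * \<phi> (\<lambda>j. d (h j)))"
    by (subst sum.swap) (simp add: sum_distrib_right)
  also have "\<dots> = (\<Sum>h\<in>?H. (if inj_on h {1..p} then 1 else 0) * \<phi> (\<lambda>j. d (h j)))"
    by (intro sum.cong refl, subst sign_sum_inj) auto
  also have "\<dots> = (\<Sum>g \<in> {g. g \<in> {1..p} \<rightarrow>\<^sub>E I \<and> inj_on g {1..p}}. \<phi> (\<lambda>j. d (g j)))"
  proof -
    have "(\<Sum>h\<in>?H. (if inj_on h {1..p} then 1 else 0) * \<phi> (\<lambda>j. d (h j))) =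
       (\<Sum>h\<in>?H. if inj_on h {1..p} then \<phi> (\<lambda>j. d (h j)) else 0)"
      by (intro sum.cong) auto
    also have "\<dots> = (\<Sum>h\<in>{h\<in>?H. inj_on h {1..p}}. \<phi> (\<lambda>j. d (h j)))"
      by (rule sum.inter_filter[OF finH, symmetric])
    finally show ?thesis by simp
  qed
  finally show ?thesis by simp
qed

lemma id_term:
  fixes p :: nat and d :: "'i \<Rightarrow> 'a::real_normed_vector"
  assumes ml: "multilinear_form p \<phi>" and fin: "finite I" and \<sigma>: "\<sigma> \<in> sgnsp p I"
  shows "\<phi> (\<lambda>j. \<Sum>i\<in>I. (\<sigma> j i * \<sigma> j i) *\<^sub>R d i) = \<phi> (\<lambda>j. \<Sum>i\<in>I. d i)"
proof (rule ml_cong[OF ml])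
  fix j assume "j \<in> {1..p}"
  then have "\<sigma> j \<in> sgns I" using \<sigma> by (auto simp: sgnsp_def PiE_iff)
  then show "(\<Sum>i\<in>I. (\<sigma> j i * \<sigma> j i) *\<^sub>R d i) = (\<Sum>i\<in>I. d i)"
    by (intro sum.cong refl) (simp add: sgns_sq)
qed



lemma prod_if_single:
  assumes "finite A" "j \<in> A"
  shows "(\<Prod>m\<in>A. if m = j then X else (Y::real)) = X * Y ^ (card A - 1)"
proof -
  have "(\<Prod>m\<in>A. if m = j then X else Y) = X * (\<Prod>m\<in>A - {j}. if m = j then X else Y)"
    using prod.remove[OF assms, of "\<lambda>m. if m = j then X else Y"] by simp
  also have "(\<Prod>m\<in>A - {j}. if m = j then X else Y) = (\<Prod>m\<in>A - {j}. Y)"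
    by (intro prod.cong) auto
  finally show ?thesis using assms by simp
qed

lemma pm: "a \<in> {-1, 1::real} \<Longrightarrow> b \<in> {-1, 1} \<Longrightarrow> a * b \<in> {-1, 1}"
  by auto

lemma unif:
  fixes G :: "('i \<Rightarrow> real) \<Rightarrow> real"
  assumes fin: "finite I" and jl: "j \<in> {1..p}" "l \<in> {1..p}" "j \<noteq> l"
    and Gc: "\<And>\<rho> \<rho>'. (\<And>i. i \<in> I \<Longrightarrow> \<rho> i = \<rho>' i) \<Longrightarrow> G \<rho> = G \<rho>'"
  shows "(\<Sum>\<sigma>\<in>sgnsp p I. G (\<lambda>i. \<sigma> j i * \<sigma> l i)) = real (card (sgns I)) ^ (p - 1) * (\<Sum>\<rho>\<in>sgns I. G \<rho>)"
proof -
  define \<Phi> where "\<Phi> = (\<lambda>\<sigma> :: nat \<Rightarrow> 'i \<Rightarrow> real. \<sigma>(j := restrict (\<lambda>i. \<sigma> j i * \<sigma> l i) I))"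
  have inS: "\<Phi> \<sigma> \<in> sgnsp p I" if "\<sigma> \<in> sgnsp p I" for \<sigma>
  proof -
    have "\<sigma> j \<in> sgns I" "\<sigma> l \<in> sgns I" using that jl by (auto simp: sgnsp_def PiE_iff)
    then have "restrict (\<lambda>i. \<sigma> j i * \<sigma> l i) I \<in> sgns I"
      using pm by (auto simp: sgns_def PiE_iff)
    then show ?thesis using that jl unfolding \<Phi>_def sgnsp_def by (auto simp: PiE_iff extensional_def)
  qed
  have invo: "\<Phi> (\<Phi> \<sigma>) = \<sigma>" if "\<sigma> \<in> sgnsp p I" for \<sigma>
  proof -
    have sj: "\<sigma> j \<in> sgns I" "\<sigma> l \<in> sgns I" using that jl by (auto simp: sgnsp_def PiE_iff)
    have "restrict (\<lambda>i. restrict (\<lambda>i. \<sigma> j i * \<sigma> l i) I i * \<sigma> l i) I = \<sigma> j"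
    proof
      fix i show "restrict (\<lambda>i. restrict (\<lambda>i. \<sigma> j i * \<sigma> l i) I i * \<sigma> l i) I i = \<sigma> j i"
      proof (cases "i \<in> I")
        case True
        then show ?thesis using sgns_sq[OF sj(2) True] by (simp add: mult.assoc)
      next
        case False
        then show ?thesis using sj(1) by (simp add: sgns_def PiE_iff extensional_def)
      qed
    qed
    then show ?thesis unfolding \<Phi>_def using jl by (auto simp: fun_eq_iff)
  qed
  have "(\<Sum>\<sigma>\<in>sgnsp p I. G (\<lambda>i. \<sigma> j i * \<sigma> l i)) = (\<Sum>\<sigma>\<in>sgnsp p I. G ((\<Phi> \<sigma>) j))"
    by (intro sum.cong refl Gc) (simp add: \<Phi>_def)
  also have "\<dots> = (\<Sum>\<sigma>\<in>sgnsp p I. G (\<sigma> j))"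
    by (rule sum.reindex_bij_witness[where i=\<Phi> and j=\<Phi>]) (use invo inS in auto)
  also have "\<dots> = (\<Sum>\<sigma>\<in>sgnsp p I. \<Prod>m\<in>{1..p}. (if m = j then G else (\<lambda>_. 1)) (\<sigma> m))"
  proof (intro sum.cong refl)
    fix \<sigma> :: "nat \<Rightarrow> 'i \<Rightarrow> real"
    have "(\<Prod>m\<in>{1..p}. (if m = j then G else (\<lambda>_. 1)) (\<sigma> m)) = (\<Prod>m\<in>{1..p}. if m = j then G (\<sigma> m) else 1)"
      by (intro prod.cong) auto
    also have "\<dots> = G (\<sigma> j)" using jl(1) by (subst prod.delta) auto
    finally show "G (\<sigma> j) = (\<Prod>m\<in>{1..p}. (if m = j then G else (\<lambda>_. 1)) (\<sigma> m))" by simp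
  qed
  also have "\<dots> = (\<Prod>m\<in>{1..p}. \<Sum>\<rho>\<in>sgns I. (if m = j then G else (\<lambda>_. 1)) \<rho>)"
    by (rule sum_sgnsp_prod[OF fin])
  also have "\<dots> = (\<Prod>m\<in>{1..p}. if m = j then (\<Sum>\<rho>\<in>sgns I. G \<rho>) else real (card (sgns I)))"
    by (intro prod.cong refl) auto
  also have "\<dots> = (\<Sum>\<rho>\<in>sgns I. G \<rho>) * real (card (sgns I)) ^ (p - 1)"
    using prod_if_single[of "{1..p}" j] jl by simp
  finally show ?thesis by simp
qed

lemma amgm:
  fixes a :: "'j \<Rightarrow> real"
  assumes "finite A" "card A = k" "k \<ge> 1" "\<And>j. j \<in> A \<Longrightarrow> a j \<ge> 0"
  shows "(\<Prod>j\<in>A. a j) \<le> (\<Sum>j\<in>A. a j ^ k) / k"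
proof -
  have ne: "A \<noteq> {}" using assms by auto
  have "(\<Prod>j\<in>A. a j ^ k) powr (1 / card A) \<le> (\<Sum>j\<in>A. a j ^ k / card A)"
    using arith_geom_mean[OF assms(1) ne, of "\<lambda>j. a j ^ k"] assms(4) by simp
  moreover have "(\<Prod>j\<in>A. a j ^ k) powr (1 / card A) = (\<Prod>j\<in>A. a j)"
  proof -
    have y: "(\<Prod>j\<in>A. a j) \<ge> 0" using assms(4) by (simp add: prod_nonneg)
    have "(\<Prod>j\<in>A. a j ^ k) = (\<Prod>j\<in>A. a j) ^ k" by (simp add: prod_power_distrib)
    moreover have "(y ^ k) powr (1 / k) = y" if "y \<ge> 0" for y :: real
    proof (cases "y = 0")
      case True then show ?thesis using assms(3) by simp
    next
      case False
      then have "y > 0" using that by simp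
      then show ?thesis using assms(3) by (simp add: powr_realpow[symmetric] powr_powr)
    qed
    ultimately show ?thesis using y assms(2) by simp
  qed
  ultimately show ?thesis using assms(2) by (simp add: sum_divide_distrib)
qed

lemma power_mean:
  fixes a :: "'r \<Rightarrow> real"
  assumes fin: "finite R" and ne: "R \<noteq> {}" and k: "1 \<le> k" "k \<le> p" and a: "\<And>r. r \<in> R \<Longrightarrow> a r \<ge> 0"
  shows "(\<Sum>r\<in>R. a r ^ k) / card R \<le> ((\<Sum>r\<in>R. a r ^ p) / card R) powr (real k / real p)"
proof -
  define A where "A = (\<Sum>r\<in>R. a r ^ p) / card R"
  have cR: "real (card R) > 0" using fin ne by (simp add: card_gt_0_iff)
  have A0: "A \<ge> 0" unfolding A_def using a by (intro divide_nonneg_pos sum_nonneg zero_le_power cR) auto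
  show ?thesis
  proof (cases "A = 0")
    case True
    then have "(\<Sum>r\<in>R. a r ^ p) = 0" using cR by (simp add: A_def)
    then have "\<forall>r\<in>R. a r ^ p = 0" using sum_nonneg_eq_0_iff[OF fin, of "\<lambda>r. a r ^ p"] a by (simp add: zero_le_power)
    then have "\<forall>r\<in>R. a r ^ k = 0" using k by auto
    then show ?thesis unfolding A_def[symmetric] using True k by (simp add: power_0_left)
  next
    case False
    then have Ap: "A > 0" using A0 by simp
    define S0 where "S0 = A powr (1 / p)"
    have p0: "real p > 0" using k by simp
    have S0p: "S0 > 0" using Ap by (simp add: S0_def)
    have S0pow: "S0 ^ p = A" using Ap p0 by (simp add: S0_def powr_realpow[symmetric] powr_powr)
    have S0k: "S0 ^ k = A powr (real k / real p)" using Ap p0 S0p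
      by (simp add: S0_def powr_realpow[symmetric] powr_powr)
    define \<alpha> where "\<alpha> = real k / real p"
    have al: "0 \<le> \<alpha>" "\<alpha> \<le> 1" using k p0 by (auto simp: \<alpha>_def)
    have pt: "a r ^ k \<le> S0 ^ k * (\<alpha> * (a r / S0) ^ p + (1 - \<alpha>))" if r: "r \<in> R" for r
    proof (cases "a r = 0")
      case True then show ?thesis using k al S0p by (simp add: power_0_left)
    next
      case False
      then have ap: "a r / S0 > 0" using a[OF r] S0p by simp
      have "((a r / S0) ^ p) powr \<alpha> * 1 powr (1 - \<alpha>) \<le> \<alpha> * (a r / S0) ^ p + (1 - \<alpha>) * 1"
        using Youngs_inequality_0[of \<alpha> "1 - \<alpha>" "(a r / S0) ^ p" 1] al ap by simp
      moreover have "((a r / S0) ^ p) powr \<alpha> = (a r / S0) ^ k"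
        using ap p0 by (simp add: \<alpha>_def powr_realpow[symmetric] powr_powr)
      ultimately have "(a r / S0) ^ k \<le> \<alpha> * (a r / S0) ^ p + (1 - \<alpha>)" by simp
      then have "S0 ^ k * (a r / S0) ^ k \<le> S0 ^ k * (\<alpha> * (a r / S0) ^ p + (1 - \<alpha>))"
        using S0p by (intro mult_left_mono) auto
      then show ?thesis using S0p by (simp add: power_divide)
    qed
    have "(\<Sum>r\<in>R. a r ^ k) \<le> (\<Sum>r\<in>R. S0 ^ k * (\<alpha> * (a r / S0) ^ p + (1 - \<alpha>)))"
      by (intro sum_mono pt)
    also have "\<dots> = (\<Sum>r\<in>R. (S0 ^ k * \<alpha> / S0 ^ p) * a r ^ p + S0 ^ k * (1 - \<alpha>))"
      using S0p by (intro sum.cong refl) (simp add: power_divide field_simps)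
    also have "\<dots> = (S0 ^ k * \<alpha> / S0 ^ p) * (\<Sum>r\<in>R. a r ^ p) + card R * (S0 ^ k * (1 - \<alpha>))"
      by (simp add: sum.distrib sum_distrib_left)
    also have "\<dots> = S0 ^ k * (\<alpha> * (\<Sum>r\<in>R. a r ^ p) / S0 ^ p + (1 - \<alpha>) * card R)"
      by (simp add: algebra_simps)
    also have "\<dots> = S0 ^ k * card R"
      using cR Ap unfolding S0pow by (simp add: A_def field_simps)
    finally show ?thesis using cR S0k by (simp add: A_def[symmetric] pos_divide_le_eq)
  qed
qed



lemma powr_pow_eq:
  fixes x :: real
  assumes "x \<ge> 0" "p > 0" "k \<ge> 1"
  shows "(x powr (1 / real p)) ^ k = x powr (real k / real p)"
proof (cases "x = 0")
  case True then show ?thesis using assms by (simp add: power_0_left)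
next
  case False
  then have "x > 0" using assms by simp
  then show ?thesis using assms by (simp add: powr_realpow[symmetric] powr_powr)
qed

lemma tau_bound:
  fixes d :: "'i \<Rightarrow> 'a::real_normed_vector" and p :: nat
  assumes fin: "finite I" and tau: "\<tau> permutes {1..p}" and nid: "\<tau> \<noteq> id"
  shows "(\<Sum>\<sigma>\<in>sgnsp p I. \<Prod>j\<in>{1..p}. norm (\<Sum>i\<in>I. (\<sigma> j i * \<sigma> (\<tau> j) i) *\<^sub>R d i)) / real (card (sgnsp p I))
    \<le> norm (\<Sum>i\<in>I. d i) ^ card {j\<in>{1..p}. \<tau> j = j} *
       (((\<Sum>\<rho>\<in>sgns I. norm (\<Sum>i\<in>I. \<rho> i *\<^sub>R d i) ^ p) / real (card (sgns I))) powr (1 / real p))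
         ^ (p - card {j\<in>{1..p}. \<tau> j = j})"
proof -
  define Fn where "Fn = (\<lambda>\<rho> :: 'i \<Rightarrow> real. norm (\<Sum>i\<in>I. \<rho> i *\<^sub>R d i))"
  define B where "B = {j\<in>{1..p}. \<tau> j = j}"
  define A where "A = {1..p} - B"
  define k where "k = card A"
  define Av where "Av = (\<Sum>\<rho>\<in>sgns I. Fn \<rho> ^ p) / real (card (sgns I))"
  define N where "N = real (card (sgns I))"
  have finS: "finite (sgns I)" using finite_sgns[OF fin] .
  have Npos: "N > 0" unfolding N_def using card_sgns[OF fin] by simp
  have NS: "real (card (sgnsp p I)) = N ^ p" unfolding N_def using card_sgnsp[OF fin] by simp
  have finA: "finite A" "finite B" unfolding A_def B_def by auto
  have kB: "k = p - card B" unfolding k_def A_def using finA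
    by (subst card_Diff_subset) (auto simp: B_def)
  have Ane: "A \<noteq> {}"
  proof
    assume "A = {}"
    then have "\<forall>j\<in>{1..p}. \<tau> j = j" unfolding A_def B_def by auto
    then have "\<tau> = id" using permutes_not_in[OF tau] by (auto simp: fun_eq_iff)
    then show False using nid by simp
  qed
  then have k1: "k \<ge> 1" unfolding k_def using finA by (simp add: Suc_le_eq card_gt_0_iff)
  have kp: "k \<le> p" unfolding k_def A_def by (metis card_atLeastAtMost diff_Suc_1 card_mono finite_atLeastAtMost Diff_subset)
  have p0: "p > 0" using k1 kp by simp
  have tA: "\<tau> j \<in> {1..p}" "\<tau> j \<noteq> j" if "j \<in> A" for j
    using that permutes_in_image[OF tau] unfolding A_def B_def by auto
  have split: "(\<Prod>j\<in>{1..p}. Fn (\<lambda>i. \<sigma> j i * \<sigma> (\<tau> j) i)) =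
       norm (\<Sum>i\<in>I. d i) ^ card B * (\<Prod>j\<in>A. Fn (\<lambda>i. \<sigma> j i * \<sigma> (\<tau> j) i))"
    if \<sigma>: "\<sigma> \<in> sgnsp p I" for \<sigma>
  proof -
    have u: "{1..p} = B \<union> A" "B \<inter> A = {}" unfolding A_def B_def by auto
    have "(\<Prod>j\<in>B. Fn (\<lambda>i. \<sigma> j i * \<sigma> (\<tau> j) i)) = (\<Prod>j\<in>B. norm (\<Sum>i\<in>I. d i))"
    proof (rule prod.cong[OF refl])
      fix j assume j: "j \<in> B"
      then have "\<sigma> j \<in> sgns I" using \<sigma> by (auto simp: sgnsp_def PiE_iff B_def)
      then show "Fn (\<lambda>i. \<sigma> j i * \<sigma> (\<tau> j) i) = norm (\<Sum>i\<in>I. d i)"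
        using j unfolding Fn_def B_def by (auto intro!: arg_cong[where f=norm] sum.cong simp: sgns_sq)
    qed
    then show ?thesis using u finA by (simp add: prod.union_disjoint)
  qed
  have "(\<Sum>\<sigma>\<in>sgnsp p I. \<Prod>j\<in>A. Fn (\<lambda>i. \<sigma> j i * \<sigma> (\<tau> j) i))
      \<le> (\<Sum>\<sigma>\<in>sgnsp p I. (\<Sum>j\<in>A. Fn (\<lambda>i. \<sigma> j i * \<sigma> (\<tau> j) i) ^ k) / k)"
    using k1 by (intro sum_mono amgm finA) (auto simp: k_def Fn_def)
  also have "\<dots> = (\<Sum>j\<in>A. \<Sum>\<sigma>\<in>sgnsp p I. Fn (\<lambda>i. \<sigma> j i * \<sigma> (\<tau> j) i) ^ k) / k"
    by (simp add: sum_divide_distrib[symmetric]) (rule disjI2, rule sum.swap)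
  also have "\<dots> = (\<Sum>j\<in>A. N ^ (p - 1) * (\<Sum>\<rho>\<in>sgns I. Fn \<rho> ^ k)) / k"
  proof -
    have "(\<Sum>\<sigma>\<in>sgnsp p I. Fn (\<lambda>i. \<sigma> j i * \<sigma> (\<tau> j) i) ^ k) = N ^ (p - 1) * (\<Sum>\<rho>\<in>sgns I. Fn \<rho> ^ k)"
      if j: "j \<in> A" for j
      unfolding N_def
      by (rule unif[OF fin, where G="\<lambda>\<rho>. Fn \<rho> ^ k"]) (use j tA[OF j] in \<open>auto simp: A_def Fn_def intro!: sum.cong\<close>)
    then show ?thesis by (intro arg_cong[where f="\<lambda>x. x / real k"] sum.cong refl) auto
  qed
  also have "\<dots> = N ^ (p - 1) * (\<Sum>\<rho>\<in>sgns I. Fn \<rho> ^ k)"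
    using k1 by (simp add: k_def)
  finally have main: "(\<Sum>\<sigma>\<in>sgnsp p I. \<Prod>j\<in>A. Fn (\<lambda>i. \<sigma> j i * \<sigma> (\<tau> j) i)) \<le> N ^ (p - 1) * (\<Sum>\<rho>\<in>sgns I. Fn \<rho> ^ k)" .
  have pm: "(\<Sum>\<rho>\<in>sgns I. Fn \<rho> ^ k) / N \<le> Av powr (real k / real p)"
    unfolding Av_def N_def
    by (rule power_mean[OF finS _ k1 kp]) (use Npos[unfolded N_def] in \<open>auto simp: Fn_def\<close>)
  have Av0: "Av \<ge> 0" unfolding Av_def by (intro divide_nonneg_nonneg sum_nonneg) (auto simp: Fn_def)
  have "(\<Sum>\<sigma>\<in>sgnsp p I. \<Prod>j\<in>{1..p}. Fn (\<lambda>i. \<sigma> j i * \<sigma> (\<tau> j) i)) / N ^ p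
      = norm (\<Sum>i\<in>I. d i) ^ card B * ((\<Sum>\<sigma>\<in>sgnsp p I. \<Prod>j\<in>A. Fn (\<lambda>i. \<sigma> j i * \<sigma> (\<tau> j) i)) / N ^ p)"
  proof -
    have "(\<Sum>\<sigma>\<in>sgnsp p I. \<Prod>j\<in>{1..p}. Fn (\<lambda>i. \<sigma> j i * \<sigma> (\<tau> j) i)) =
       (\<Sum>\<sigma>\<in>sgnsp p I. norm (\<Sum>i\<in>I. d i) ^ card B * (\<Prod>j\<in>A. Fn (\<lambda>i. \<sigma> j i * \<sigma> (\<tau> j) i)))"
      by (rule sum.cong[OF refl]) (rule split)
    then show ?thesis by (simp add: sum_distrib_left[symmetric])
  qed
  also have "\<dots> \<le> norm (\<Sum>i\<in>I. d i) ^ card B * (N ^ (p - 1) * (\<Sum>\<rho>\<in>sgns I. Fn \<rho> ^ k) / N ^ p)"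
    using main Npos by (intro mult_left_mono divide_right_mono) auto
  also have "N ^ (p - 1) * (\<Sum>\<rho>\<in>sgns I. Fn \<rho> ^ k) / N ^ p = (\<Sum>\<rho>\<in>sgns I. Fn \<rho> ^ k) / N"
  proof -
    have "N ^ p = N ^ (p - 1) * N" using p0 by (metis Suc_diff_1 power_Suc2)
    then show ?thesis using Npos by simp
  qed
  also have "norm (\<Sum>i\<in>I. d i) ^ card B * ((\<Sum>\<rho>\<in>sgns I. Fn \<rho> ^ k) / N) \<le> norm (\<Sum>i\<in>I. d i) ^ card B * Av powr (real k / real p)"
    using pm by (intro mult_left_mono) auto
  also have "Av powr (real k / real p) = (Av powr (1 / real p)) ^ k"
    using powr_pow_eq[OF Av0 p0 k1] by simp
  finally have "(\<Sum>\<sigma>\<in>sgnsp p I. \<Prod>j\<in>{1..p}. Fn (\<lambda>i. \<sigma> j i * \<sigma> (\<tau> j) i)) / real (card (sgnsp p I))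
     \<le> norm (\<Sum>i\<in>I. d i) ^ card B * (Av powr (1 / real p)) ^ k" unfolding NS .
  then show ?thesis unfolding kB B_def Av_def Fn_def N_def by simp
qed



lemma fix_le:
  fixes p :: nat
  assumes tau: "\<tau> permutes {1..p}" and nid: "\<tau> \<noteq> id"
  shows "card {j\<in>{1..p}. \<tau> j = j} \<le> p - 2"
proof -
  define A where "A = {j\<in>{1..p}. \<tau> j \<noteq> j}"
  obtain a where a: "\<tau> a \<noteq> a" using nid by (auto simp: fun_eq_iff)
  then have aA: "a \<in> A" using permutes_not_in[OF tau] unfolding A_def by fastforce
  have "\<tau> a \<in> {1..p}" using aA permutes_in_image[OF tau] unfolding A_def by auto
  moreover have "\<tau> (\<tau> a) \<noteq> \<tau> a"
    using a permutes_inj[OF tau] by (metis injD)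
  ultimately have "\<tau> a \<in> A" unfolding A_def by auto
  then have "{a, \<tau> a} \<subseteq> A" using aA by auto
  moreover have "finite A" unfolding A_def by auto
  moreover have "card {a, \<tau> a} = 2" using a by simp
  ultimately have "2 \<le> card A" by (metis card_mono)
  moreover have "card {j\<in>{1..p}. \<tau> j = j} + card A = p"
  proof -
    have "{j\<in>{1..p}. \<tau> j = j} \<union> A = {1..p}" "{j\<in>{1..p}. \<tau> j = j} \<inter> A = {}" unfolding A_def by auto
    moreover have "finite {j\<in>{1..p}. \<tau> j = j}" "finite A" unfolding A_def by auto
    ultimately show ?thesis using card_Un_disjoint[of "{j\<in>{1..p}. \<tau> j = j}" A] by simp
  qed
  ultimately show ?thesis by linarith
qed

lemma card_fix_bound:
  fixes p :: nat
  shows "card {\<tau>. \<tau> permutes {1..p} \<and> card {j\<in>{1..p}. \<tau> j = j} = s} \<le> (p choose s) * fact (p - s)"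
proof -
  let ?Bs = "{B. B \<subseteq> {1..p} \<and> card B = s}"
  have sub: "{\<tau>. \<tau> permutes {1..p} \<and> card {j\<in>{1..p}. \<tau> j = j} = s} \<subseteq> (\<Union>B\<in>?Bs. {\<tau>. \<tau> permutes ({1..p} - B)})"
  proof
    fix \<tau> assume t: "\<tau> \<in> {\<tau>. \<tau> permutes {1..p} \<and> card {j\<in>{1..p}. \<tau> j = j} = s}"
    let ?B = "{j\<in>{1..p}. \<tau> j = j}"
    have t1: "\<tau> permutes {1..p}" using t by simp
    have a1: "\<forall>x. x \<notin> {1..p} - ?B \<longrightarrow> \<tau> x = x" using permutes_not_in[OF t1] by blast
    have a2: "\<forall>y. \<exists>!x. \<tau> x = y" using t1 unfolding permutes_def by blast
    have "\<tau> permutes ({1..p} - ?B)" unfolding permutes_def using a1 a2 by blast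
    moreover have "?B \<in> ?Bs" using t by auto
    ultimately show "\<tau> \<in> (\<Union>B\<in>?Bs. {\<tau>. \<tau> permutes ({1..p} - B)})" by blast
  qed
  have finBs: "finite ?Bs" by (rule finite_subset[of _ "Pow {1..p}"]) auto
  have "card {\<tau>. \<tau> permutes {1..p} \<and> card {j\<in>{1..p}. \<tau> j = j} = s} \<le> card (\<Union>B\<in>?Bs. {\<tau>. \<tau> permutes ({1..p} - B)})"
  proof (rule card_mono[OF _ sub])
    show "finite (\<Union>B\<in>?Bs. {\<tau>. \<tau> permutes ({1..p} - B)})"
      by (rule finite_UN_I[OF finBs]) (rule finite_permutations, simp)
  qed
  also have "\<dots> \<le> (\<Sum>B\<in>?Bs. card {\<tau>. \<tau> permutes ({1..p} - B)})"
    by (rule card_UN_le[OF finBs])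
  also have "\<dots> = (\<Sum>B\<in>?Bs. fact (p - s))"
  proof (rule sum.cong[OF refl])
    fix B assume "B \<in> ?Bs"
    then have "card ({1..p} - B) = p - s" by (auto simp: card_Diff_subset finite_subset)
    then show "card {\<tau>. \<tau> permutes ({1..p} - B)} = fact (p - s)" by (intro card_permutations) auto
  qed
  also have "\<dots> = (p choose s) * fact (p - s)" using n_subsets[of "{1..p}" s] by simp
  finally show ?thesis .
qed

lemma count_bound:
  fixes p :: nat and w :: "nat \<Rightarrow> real"
  assumes w: "\<And>s. w s \<ge> 0"
  shows "(\<Sum>\<tau>\<in>{\<tau>. \<tau> permutes {1..p}} - {id}. w (card {j\<in>{1..p}. \<tau> j = j}))
     \<le> (\<Sum>s=0..p-2. real (p choose s) * fact (p - s) * w s)"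
proof -
  let ?Q = "{\<tau>. \<tau> permutes {1..p}} - {id}"
  let ?fx = "\<lambda>\<tau>. card {j\<in>{1..p}. \<tau> j = j}"
  have finQ: "finite ?Q" using finite_permutations[of "{1..p}"] by simp
  have "(\<Sum>\<tau>\<in>?Q. w (?fx \<tau>)) = (\<Sum>s\<in>?fx ` ?Q. \<Sum>\<tau>\<in>{\<tau>\<in>?Q. ?fx \<tau> = s}. w (?fx \<tau>))"
    by (rule sum.image_gen[OF finQ])
  also have "\<dots> = (\<Sum>s\<in>?fx ` ?Q. real (card {\<tau>\<in>?Q. ?fx \<tau> = s}) * w s)"
    by (intro sum.cong refl) simp
  also have "\<dots> \<le> (\<Sum>s\<in>{0..p-2}. real (card {\<tau>\<in>?Q. ?fx \<tau> = s}) * w s)"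
  proof (rule sum_mono2)
    show "?fx ` ?Q \<subseteq> {0..p-2}"
    proof
      fix s assume "s \<in> ?fx ` ?Q"
      then obtain \<tau> where "\<tau> permutes {1..p}" "\<tau> \<noteq> id" "s = ?fx \<tau>" by auto
      then show "s \<in> {0..p-2}" using fix_le[of \<tau> p] by simp
    qed
  next
    show "finite {0..p-2}" by simp
  next
    fix s show "0 \<le> real (card {\<tau>\<in>?Q. ?fx \<tau> = s}) * w s" using w[of s] by simp
  qed
  also have "\<dots> \<le> (\<Sum>s=0..p-2. real (p choose s) * fact (p - s) * w s)"
  proof (rule sum_mono)
    fix s
    have "card {\<tau>\<in>?Q. ?fx \<tau> = s} \<le> card {\<tau>. \<tau> permutes {1..p} \<and> ?fx \<tau> = s}"
    proof (rule card_mono)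
      show "finite {\<tau>. \<tau> permutes {1..p} \<and> ?fx \<tau> = s}"
        using finite_permutations[of "{1..p}"] by (rule finite_subset[rotated]) auto
    qed auto
    also have "\<dots> \<le> (p choose s) * fact (p - s)" by (rule card_fix_bound)
    finally have "real (card {\<tau>\<in>?Q. ?fx \<tau> = s}) \<le> real (p choose s) * fact (p - s)"
      by (simp only: of_nat_le_iff[symmetric, where 'a=real] of_nat_mult of_nat_fact)
    then show "real (card {\<tau>\<in>?Q. ?fx \<tau> = s}) * w s \<le> real (p choose s) * fact (p - s) * w s"
      using w by (intro mult_right_mono) auto
  qed
  finally show ?thesis .
qed



lemma floor_div_lim: "(\<lambda>n. real_of_int \<lfloor>real n * t\<rfloor> / real n) \<longlonglongrightarrow> t"
proof (rule tendsto_sandwich[where f="\<lambda>n. t - 1 / real n" and h="\<lambda>n. t"])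
  show "\<forall>\<^sub>F n in sequentially. t - 1 / real n \<le> real_of_int \<lfloor>real n * t\<rfloor> / real n"
    using eventually_gt_at_top[of "0::nat"]
  proof eventually_elim
    case (elim n)
    have "real n * t - 1 \<le> real_of_int \<lfloor>real n * t\<rfloor>" by linarith
    then have "(real n * t - 1) / real n \<le> real_of_int \<lfloor>real n * t\<rfloor> / real n"
      by (rule divide_right_mono) simp
    then show ?case using elim by (simp add: diff_divide_distrib)
  qed
  show "\<forall>\<^sub>F n in sequentially. real_of_int \<lfloor>real n * t\<rfloor> / real n \<le> t"
    using eventually_gt_at_top[of "0::nat"]
  proof eventually_elim
    case (elim n)
    have "real_of_int \<lfloor>real n * t\<rfloor> \<le> real n * t" by linarith
    then show ?case using elim by (simp add: field_simps)
  qed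
  show "(\<lambda>n. t - 1 / real n) \<longlonglongrightarrow> t"
    using tendsto_diff[OF tendsto_const[of t] lim_1_over_n] by simp
qed simp

lemma meas_norm_sum:
  fixes d :: "'i \<Rightarrow> 'a::real_normed_vector" and \<epsilon> :: "'i \<Rightarrow> 'm \<Rightarrow> real"
  assumes "finite J" and "\<And>i. i \<in> J \<Longrightarrow> \<epsilon> i \<in> borel_measurable M"
  shows "(\<lambda>\<omega>. norm (v + (\<Sum>i\<in>J. \<epsilon> i \<omega> *\<^sub>R d i))) \<in> borel_measurable M"
  using assms
proof (induction J arbitrary: v rule: finite_induct)
  case empty
  then show ?case by simp
next
  case (insert j J)
  define h where "h = (\<lambda>t \<omega>. norm ((v + t *\<^sub>R d j) + (\<Sum>i\<in>J. \<epsilon> i \<omega> *\<^sub>R d i)))"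
  have hm: "h t \<in> borel_measurable M" for t
    unfolding h_def using insert by auto
  have ej: "\<epsilon> j \<in> borel_measurable M" using insert by auto
  define u where "u = (\<lambda>n \<omega>. h (real_of_int \<lfloor>real n * \<epsilon> j \<omega>\<rfloor> / real n) \<omega>)"
  have um: "u n \<in> borel_measurable M" for n
  proof -
    have g: "(\<lambda>\<omega>. \<lfloor>real n * \<epsilon> j \<omega>\<rfloor>) \<in> M \<rightarrow>\<^sub>M count_space UNIV"
      by (rule measurable_compose[OF _ measurable_real_floor]) (use ej in simp)
    show ?thesis unfolding u_def
      by (rule measurable_compose_countable[where f="\<lambda>k \<omega>. h (real_of_int k / real n) \<omega>", OF hm g])
  qed
  have lim: "(\<lambda>n. u n \<omega>) \<longlonglongrightarrow> h (\<epsilon> j \<omega>) \<omega>" for \<omega>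
    unfolding u_def h_def
    by (intro tendsto_intros floor_div_lim)
  have "h (\<epsilon> j \<omega>) \<omega> = norm (v + (\<Sum>i\<in>insert j J. \<epsilon> i \<omega> *\<^sub>R d i))" for \<omega>
    unfolding h_def using insert by (simp add: add.assoc)
  moreover have "(\<lambda>\<omega>. h (\<epsilon> j \<omega>) \<omega>) \<in> borel_measurable M"
    by (rule borel_measurable_LIMSEQ_real[OF lim um])
  ultimately show ?case by simp
qed



lemma integral_sgns:
  fixes d :: "'i \<Rightarrow> 'a::real_normed_vector" and \<epsilon> :: "'i \<Rightarrow> 'm \<Rightarrow> real"
  assumes fin: "finite I" and ps: "prob_space M"
    and ind: "prob_space.indep_vars M (\<lambda>_. borel) \<epsilon> I"
    and h1: "\<And>i. i \<in> I \<Longrightarrow> measure M {\<omega> \<in> space M. \<epsilon> i \<omega> = 1} = 1/2"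
    and h2: "\<And>i. i \<in> I \<Longrightarrow> measure M {\<omega> \<in> space M. \<epsilon> i \<omega> = -1} = 1/2"
  shows "integral\<^sup>L M (\<lambda>\<omega>. norm (\<Sum>i\<in>I. \<epsilon> i \<omega> *\<^sub>R d i) ^ p) =
     (\<Sum>\<rho>\<in>sgns I. norm (\<Sum>i\<in>I. \<rho> i *\<^sub>R d i) ^ p) / real (card (sgns I))"
proof -
  interpret prob_space M by (rule ps)
  define c where "c = (\<lambda>\<rho> :: 'i \<Rightarrow> real. norm (\<Sum>i\<in>I. \<rho> i *\<^sub>R d i) ^ p)"
  define E where "E = (\<lambda>\<rho> :: 'i \<Rightarrow> real. {\<omega> \<in> space M. \<forall>i\<in>I. \<epsilon> i \<omega> = \<rho> i})"
  have rv: "\<epsilon> i \<in> borel_measurable M" if "i \<in> I" for i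
    using ind that unfolding indep_vars_def2 by auto
  have finS: "finite (sgns I)" using finite_sgns[OF fin] .
  have cardS: "real (card (sgns I)) = 2 ^ card I" using card_sgns[OF fin] by simp
  have Ev: "E \<rho> \<in> events" for \<rho>
  proof (cases "I = {}")
    case True
    then show ?thesis unfolding E_def by simp
  next
    case False
    have "E \<rho> = (\<Inter>i\<in>I. \<epsilon> i -` {\<rho> i} \<inter> space M)" unfolding E_def using False by auto
    also have "\<dots> \<in> events"
      using fin rv False by (intro sets.finite_INT measurable_sets) auto
    finally show ?thesis .
  qed
  have PE: "prob (E \<rho>) = (1/2) ^ card I" if \<rho>: "\<rho> \<in> sgns I" for \<rho>
  proof (cases "I = {}")
    case True
    then show ?thesis unfolding E_def by (simp add: prob_space)
  next
    case False
    have "E \<rho> = (\<Inter>i\<in>I. \<epsilon> i -` {\<rho> i} \<inter> space M)" unfolding E_def using False by auto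
    then have "prob (E \<rho>) = (\<Prod>i\<in>I. prob (\<epsilon> i -` {\<rho> i} \<inter> space M))"
      using indep_varsD[OF ind False fin] by auto
    also have "\<dots> = (\<Prod>i\<in>I. 1/2)"
    proof (rule prod.cong[OF refl])
      fix i assume i: "i \<in> I"
      have "\<rho> i = -1 \<or> \<rho> i = 1" using \<rho> i by (auto simp: sgns_def PiE_iff)
      moreover have "\<epsilon> i -` {\<rho> i} \<inter> space M = {\<omega> \<in> space M. \<epsilon> i \<omega> = \<rho> i}" by auto
      ultimately show "prob (\<epsilon> i -` {\<rho> i} \<inter> space M) = 1/2" using h1[OF i] h2[OF i] by auto
    qed
    finally show ?thesis by simp
  qed
  have disj: "disjoint_family_on E (sgns I)"
  unfolding disjoint_family_on_def
  proof (intro ballI impI)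
    fix \<rho> \<rho>' assume r: "\<rho> \<in> sgns I" "\<rho>' \<in> sgns I" "\<rho> \<noteq> \<rho>'"
    then obtain i where i: "i \<in> I" "\<rho> i \<noteq> \<rho>' i"
      unfolding sgns_def by (metis PiE_ext)
    then show "E \<rho> \<inter> E \<rho>' = {}" unfolding E_def by auto
  qed
  have "prob (\<Union>\<rho>\<in>sgns I. E \<rho>) = (\<Sum>\<rho>\<in>sgns I. prob (E \<rho>))"
    by (rule finite_measure_finite_Union[OF finS _ disj]) (use Ev in auto)
  also have "\<dots> = 1" using PE cardS by (simp add: power_one_over)
  finally have AEU: "AE \<omega> in M. \<omega> \<in> (\<Union>\<rho>\<in>sgns I. E \<rho>)" by (rule AE_prob_1)
  have pt: "norm (\<Sum>i\<in>I. \<epsilon> i \<omega> *\<^sub>R d i) ^ p = (\<Sum>\<rho>\<in>sgns I. c \<rho> * indicator (E \<rho>) \<omega>)"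
    if w: "\<omega> \<in> (\<Union>\<rho>\<in>sgns I. E \<rho>)" for \<omega>
  proof -
    obtain \<rho>0 where r0: "\<rho>0 \<in> sgns I" "\<omega> \<in> E \<rho>0" using w by auto
    have "(\<Sum>\<rho>\<in>sgns I. c \<rho> * indicator (E \<rho>) \<omega>) = c \<rho>0 * indicator (E \<rho>0) \<omega>"
    proof (rule sum.remove[OF finS r0(1), THEN trans])
      have "(\<Sum>\<rho>\<in>sgns I - {\<rho>0}. c \<rho> * indicator (E \<rho>) \<omega>) = 0"
      proof (rule sum.neutral, rule ballI)
        fix \<rho> assume "\<rho> \<in> sgns I - {\<rho>0}"
        then have "\<omega> \<notin> E \<rho>" using disj r0 unfolding disjoint_family_on_def by blast
        then show "c \<rho> * indicator (E \<rho>) \<omega> = 0" by simp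
      qed
      then show "c \<rho>0 * indicator (E \<rho>0) \<omega> + (\<Sum>\<rho>\<in>sgns I - {\<rho>0}. c \<rho> * indicator (E \<rho>) \<omega>) = c \<rho>0 * indicator (E \<rho>0) \<omega>"
        by simp
    qed
    also have "\<dots> = c \<rho>0" using r0 by simp
    also have "\<dots> = norm (\<Sum>i\<in>I. \<epsilon> i \<omega> *\<^sub>R d i) ^ p"
      using r0(2) unfolding c_def E_def by (auto intro!: arg_cong[where f="\<lambda>x. norm x ^ p"] sum.cong)
    finally show ?thesis by simp
  qed
  have "integral\<^sup>L M (\<lambda>\<omega>. norm (\<Sum>i\<in>I. \<epsilon> i \<omega> *\<^sub>R d i) ^ p) =
      integral\<^sup>L M (\<lambda>\<omega>. \<Sum>\<rho>\<in>sgns I. c \<rho> * indicator (E \<rho>) \<omega>)"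
  proof (rule integral_cong_AE)
    show "(\<lambda>\<omega>. norm (\<Sum>i\<in>I. \<epsilon> i \<omega> *\<^sub>R d i) ^ p) \<in> borel_measurable M"
      using meas_norm_sum[OF fin rv, where v=0 and d=d] by (intro borel_measurable_power) simp
    show "(\<lambda>\<omega>. \<Sum>\<rho>\<in>sgns I. c \<rho> * indicator (E \<rho>) \<omega>) \<in> borel_measurable M"
      using Ev by (intro borel_measurable_sum borel_measurable_times borel_measurable_indicator) auto
    show "AE \<omega> in M. norm (\<Sum>i\<in>I. \<epsilon> i \<omega> *\<^sub>R d i) ^ p = (\<Sum>\<rho>\<in>sgns I. c \<rho> * indicator (E \<rho>) \<omega>)"
      using AEU by eventually_elim (rule pt)
  qed
  also have "\<dots> = (\<Sum>\<rho>\<in>sgns I. c \<rho> * prob (E \<rho>))"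
    using Ev by (simp add: integrable_real_indicator emeasure_eq_measure)
  also have "\<dots> = (\<Sum>\<rho>\<in>sgns I. c \<rho>) / real (card (sgns I))"
  proof -
    have "(\<Sum>\<rho>\<in>sgns I. c \<rho> * prob (E \<rho>)) = (\<Sum>\<rho>\<in>sgns I. c \<rho> / real (card (sgns I)))"
      using PE cardS by (intro sum.cong refl) (simp add: power_one_over)
    then show ?thesis by (simp add: sum_divide_distrib)
  qed
  finally show ?thesis unfolding c_def .
qed



theorem corollary5p2:
  fixes p :: nat and I :: "'i set" and d :: "'i \<Rightarrow> 'a::banach"
    and M :: "'m measure" and \<epsilon> :: "'i \<Rightarrow> 'm \<Rightarrow> real"
  assumes "p \<ge> 2"
    and "finite I"
    and "prob_space M"
    and "prob_space.indep_vars M (\<lambda>_. borel) \<epsilon> I"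
    and "\<And>i. i \<in> I \<Longrightarrow> measure M {\<omega> \<in> space M. \<epsilon> i \<omega> = 1} = 1/2"
    and "\<And>i. i \<in> I \<Longrightarrow> measure M {\<omega> \<in> space M. \<epsilon> i \<omega> = -1} = 1/2"
  defines "f \<equiv> (\<Sum>i\<in>I. d i)"
    and "S \<equiv> (integral\<^sup>L M (\<lambda>\<omega>. norm (\<Sum>i\<in>I. \<epsilon> i \<omega> *\<^sub>R d i) ^ p)) powr (1 / real p)"
  shows "proj_tensor_norm p
           (\<lambda>\<phi>. \<phi> (\<lambda>j. f) - (\<Sum>g \<in> {g. g \<in> {1..p} \<rightarrow>\<^sub>E I \<and> inj_on g {1..p}}. \<phi> (\<lambda>j. d (g j))))
         \<le> (\<Sum>s=0..p-2. real (p choose s) * fact (p - s) * norm f ^ s * S ^ (p - s))"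
proof -
  have fin: "finite I" by fact
  let ?P = "{\<tau>. \<tau> permutes {1..p}}"
  let ?Q = "?P - {id}"
  let ?N = "real (card (sgnsp p I))"
  define x where "x = (\<lambda>(\<tau>, \<sigma>) (j::nat). \<Sum>i\<in>I. (\<sigma> j i * \<sigma> (\<tau> j) i) *\<^sub>R d i)"
  define c where "c = (\<lambda>(\<tau>::nat \<Rightarrow> nat, \<sigma>::nat \<Rightarrow> 'i \<Rightarrow> real). - real_of_int (sign \<tau>) / ?N)"
  have finP: "finite ?P" using finite_permutations[of "{1..p}"] by simp
  have finS: "finite (sgnsp p I)" using finite_sgnsp[OF fin] .
  have Npos: "?N > 0" using card_sgnsp[OF fin, of p] card_sgns[OF fin] by simp
  have rep: "(\<phi> (\<lambda>j. f) - (\<Sum>g \<in> {g. g \<in> {1..p} \<rightarrow>\<^sub>E I \<and> inj_on g {1..p}}. \<phi> (\<lambda>j. d (g j))))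
      = (\<Sum>k\<in>?Q \<times> sgnsp p I. c k * \<phi> (x k))" if ml: "multilinear_form p \<phi>" for \<phi>
  proof -
    let ?T = "\<lambda>\<tau>. real_of_int (sign \<tau>) / ?N * (\<Sum>\<sigma>\<in>sgnsp p I. \<phi> (\<lambda>j. \<Sum>i\<in>I. (\<sigma> j i * \<sigma> (\<tau> j) i) *\<^sub>R d i))"
    have "(\<Sum>g \<in> {g. g \<in> {1..p} \<rightarrow>\<^sub>E I \<and> inj_on g {1..p}}. \<phi> (\<lambda>j. d (g j))) = (\<Sum>\<tau>\<in>?P. ?T \<tau>)"
      by (rule inj_sum_identity[OF ml fin])
    also have "\<dots> = ?T id + (\<Sum>\<tau>\<in>?Q. ?T \<tau>)"
      by (rule sum.remove[OF finP]) (simp add: permutes_id)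
    also have "?T id = \<phi> (\<lambda>j. f)"
    proof -
      have "?T id = 1 / ?N * (\<Sum>\<sigma>\<in>sgnsp p I. \<phi> (\<lambda>j. \<Sum>i\<in>I. d i))"
        using id_term[OF ml fin] by simp
      then show ?thesis using Npos by (simp add: f_def)
    qed
    finally have e: "(\<Sum>g \<in> {g. g \<in> {1..p} \<rightarrow>\<^sub>E I \<and> inj_on g {1..p}}. \<phi> (\<lambda>j. d (g j))) = \<phi> (\<lambda>j. f) + (\<Sum>\<tau>\<in>?Q. ?T \<tau>)" .
    have "(\<Sum>k\<in>?Q \<times> sgnsp p I. c k * \<phi> (x k)) = (\<Sum>\<tau>\<in>?Q. \<Sum>\<sigma>\<in>sgnsp p I. c (\<tau>, \<sigma>) * \<phi> (x (\<tau>, \<sigma>)))"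
      by (simp add: sum.cartesian_product split_def)
    also have "\<dots> = - (\<Sum>\<tau>\<in>?Q. ?T \<tau>)"
      by (simp add: c_def x_def sum_distrib_left sum_negf[symmetric])
    finally show ?thesis using e by simp
  qed
  have "proj_tensor_norm p
           (\<lambda>\<phi>. \<phi> (\<lambda>j. f) - (\<Sum>g \<in> {g. g \<in> {1..p} \<rightarrow>\<^sub>E I \<and> inj_on g {1..p}}. \<phi> (\<lambda>j. d (g j))))
      \<le> (\<Sum>k\<in>?Q \<times> sgnsp p I. \<bar>c k\<bar> * (\<Prod>j\<in>{1..p}. norm (x k j)))"
    by (rule proj_le) (use finP finS assms(1) rep in auto)
  also have "\<dots> = (\<Sum>\<tau>\<in>?Q. (\<Sum>\<sigma>\<in>sgnsp p I. \<Prod>j\<in>{1..p}. norm (\<Sum>i\<in>I. (\<sigma> j i * \<sigma> (\<tau> j) i) *\<^sub>R d i)) / ?N)"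
  proof -
    have ab: "\<bar>c (\<tau>, \<sigma>)\<bar> = 1 / ?N" for \<tau> \<sigma>
    proof -
      have "\<bar>real_of_int (sign \<tau>)\<bar> = 1" by (simp only: of_int_abs[symmetric] abs_sign)
      then show ?thesis using Npos by (simp add: c_def abs_divide)
    qed
    have "(\<Sum>k\<in>?Q \<times> sgnsp p I. \<bar>c k\<bar> * (\<Prod>j\<in>{1..p}. norm (x k j))) =
       (\<Sum>\<tau>\<in>?Q. \<Sum>\<sigma>\<in>sgnsp p I. \<bar>c (\<tau>, \<sigma>)\<bar> * (\<Prod>j\<in>{1..p}. norm (x (\<tau>, \<sigma>) j)))"
      by (simp add: sum.cartesian_product split_def)
    also have "\<dots> = (\<Sum>\<tau>\<in>?Q. (\<Sum>\<sigma>\<in>sgnsp p I. \<Prod>j\<in>{1..p}. norm (\<Sum>i\<in>I. (\<sigma> j i * \<sigma> (\<tau> j) i) *\<^sub>R d i)) / ?N)"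
      unfolding ab by (simp add: x_def sum_divide_distrib)
    finally show ?thesis .
  qed
  also have "\<dots> \<le> (\<Sum>\<tau>\<in>?Q. norm f ^ card {j\<in>{1..p}. \<tau> j = j} * S ^ (p - card {j\<in>{1..p}. \<tau> j = j}))"
  proof (rule sum_mono)
    fix \<tau> assume t: "\<tau> \<in> ?Q"
    have "S = ((\<Sum>\<rho>\<in>sgns I. norm (\<Sum>i\<in>I. \<rho> i *\<^sub>R d i) ^ p) / real (card (sgns I))) powr (1 / real p)"
      unfolding S_def using integral_sgns[OF fin assms(3,4,5,6), of d p] by simp
    then show "(\<Sum>\<sigma>\<in>sgnsp p I. \<Prod>j\<in>{1..p}. norm (\<Sum>i\<in>I. (\<sigma> j i * \<sigma> (\<tau> j) i) *\<^sub>R d i)) / ?N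
        \<le> norm f ^ card {j\<in>{1..p}. \<tau> j = j} * S ^ (p - card {j\<in>{1..p}. \<tau> j = j})"
      using tau_bound[OF fin, of \<tau> p d] t unfolding f_def by simp
  qed
  also have "\<dots> \<le> (\<Sum>s=0..p-2. real (p choose s) * fact (p - s) * (norm f ^ s * S ^ (p - s)))"
    by (rule count_bound) (simp add: S_def)
  finally show ?thesis by (simp add: mult.assoc)
qed

end
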